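(* Let $n\in\mathbb{N}\cup\{0\}$, $0\le i\le n-1$ and $\alpha>-1$. Let $t_1<\dots<t_n$ be the zeros of $L_n^{(\alpha)}$. Then $$\int_0^\infty\frac{t^i}{i!}|\ell_n^{(\alpha)}(t)|\,dt=2\sum_{m=1}^n(-1)^{m+1}\sum_{k=0}^i\frac{(-1)^k}{(i-k)!}\,t_m^{i-k}\,\ell_{n-1-k}^{(\alpha+1+k)}(t_m).$$
   Context: The generalized Laguerre polynomials are $L_n^{(\alpha)}(t)=\sum_{k=0}^n(-1)^k\binom{n+\alpha}{n-k}\frac{t^k}{k!}$, and the Laguerre functions are $\ell_n^{(\alpha)}(t)=\frac{n!}{\Gamma(n+\alpha+1)}t^{\alpha}e^{-t}L_n^{(\alpha)}(t)$ for $t>0$. For $\alpha>-1$ the zeros of $L_n^{(\alpha)}$ are real, simple and positive. *)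

theory Defs
  imports "HOL-Analysis.Analysis"
begin

definition laguerre :: "nat \<Rightarrow> real \<Rightarrow> real \<Rightarrow> real" where
  "laguerre n \<alpha> t = (\<Sum>k=0..n. (-1)^k * ((real n + \<alpha>) gchoose (n - k)) * t^k / fact k)"

definition laguerre_fun :: "nat \<Rightarrow> real \<Rightarrow> real \<Rightarrow> real" where
  "laguerre_fun n \<alpha> t = fact n / Gamma (real n + \<alpha> + 1) * t powr \<alpha> * exp (- t) * laguerre n \<alpha> t"

end

theory Submission
  imports Defs "HOL-Real_Asymp.Real_Asymp" "HOL-Computational_Algebra.Polynomial"
begin


lemma gch_pos:
  assumes "\<alpha> > -1" "j \<le> n"
  shows "((real n + \<alpha>) gchoose j) > 0"
proof -
  have "real n + \<alpha> - real j + 1 > 0" using assms by simp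
  then show ?thesis unfolding gbinomial_pochhammer'
    by (intro divide_pos_pos pochhammer_pos) auto
qed

lemma lag_pos:
  assumes "\<alpha> > -1" "x \<le> 0"
  shows "laguerre n \<alpha> x > 0"
  unfolding laguerre_def
proof (rule sum_pos2[where i=0])
  show "0 < (-1) ^ 0 * ((real n + \<alpha>) gchoose (n - 0)) * x ^ 0 / fact 0"
    using gch_pos[OF assms(1), of n n] by simp
  fix k assume k: "k \<in> {0..n}"
  have "(-1) ^ k * ((real n + \<alpha>) gchoose (n - k)) * x ^ k / fact k
      = ((real n + \<alpha>) gchoose (n - k)) * (-x) ^ k / fact k"
    by (simp add: power_minus')
  also have "\<dots> \<ge> 0" using gch_pos[OF assms(1), of "n-k" n] assms(2)
    by (intro divide_nonneg_pos mult_nonneg_nonneg zero_le_power) auto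
  finally show "0 \<le> (-1) ^ k * ((real n + \<alpha>) gchoose (n - k)) * x ^ k / fact k" .
qed auto

lemma gch_step: "(a - real q) * (a gchoose q) = real (Suc q) * (a gchoose Suc q)"
  using gbinomial_mult_1[of a q] by (simp add: algebra_simps)



lemma coef_id:
  fixes \<beta> :: real and p k :: nat
  defines "a \<equiv> real p + (\<beta> + 1)"
  defines "c \<equiv> \<lambda>k. (-1)^k * (a gchoose (p - k)) / fact k"
  defines "d \<equiv> \<lambda>k. (-1)^k * (a gchoose (Suc p - k)) / fact k"
  assumes "k \<le> Suc p"
  shows "(if k \<le> p then (\<beta> + 1 + real k) * c k else 0) - (if k = 0 then 0 else c (k-1))
         = real (Suc p) * d k"
proof (cases k)
  case 0
  have "(a - real p) * (a gchoose p) = real (Suc p) * (a gchoose Suc p)" by (rule gch_step)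
  then show ?thesis using 0 by (simp add: c_def d_def a_def)
next
  case (Suc j)
  show ?thesis
  proof (cases "k \<le> p")
    case True
    define q where "q = p - Suc j"
    have pj: "p - j = Suc q" "p - Suc j = q" "Suc p - Suc j = Suc q" using True Suc q_def by auto
    have st: "(a - real q) * (a gchoose q) = real (Suc q) * (a gchoose Suc q)" by (rule gch_step)
    have aq: "a - real q = \<beta> + 1 + real (Suc j)" using True Suc q_def by (simp add: a_def of_nat_diff)
    have fnz: "(fact j + fact j * real j :: real) \<noteq> 0"
      by (metis add_pos_nonneg fact_gt_zero mult_nonneg_nonneg of_nat_0_le_iff order_less_irrefl order_less_imp_le)
    have pq: "real (Suc p) = real (Suc q) + real (Suc j)" using True Suc q_def by simp
    define u :: real where "u = (-1)^j / fact (Suc j)"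
    have u1: "(-1)^j / fact j = u * real (Suc j)"
      unfolding u_def by (simp add: field_simps del: of_nat_Suc)
    have ck: "c k = - u * (a gchoose q)" unfolding c_def Suc u_def by (simp add: pj)
    have ck1: "c (k-1) = u * real (Suc j) * (a gchoose Suc q)" unfolding c_def Suc
      using u1 by (simp add: pj) (metis times_divide_eq_left mult.commute mult.left_commute)
    have dk: "d k = - u * (a gchoose Suc q)" unfolding d_def Suc u_def by (simp add: pj)
    have "(\<beta> + 1 + real k) * c k - c (k-1) = - u * ((a - real q) * (a gchoose q) + real (Suc j) * (a gchoose Suc q))"
      unfolding ck ck1 aq by (simp add: Suc algebra_simps)
    also have "\<dots> = real (Suc p) * d k" unfolding st dk pq by (simp add: algebra_simps)
    finally show ?thesis using True Suc by simp
  next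
    case False
    then have kp: "k = Suc p" "j = p" using assms(4) Suc by auto
    have "fact p + fact p * real p > (0::real)" by (simp add: add_pos_nonneg)
    then show ?thesis using kp unfolding c_def d_def
      by (simp add: field_simps)
  qed
qed



lemma lag_sum: "laguerre n \<alpha> y = (\<Sum>k=0..n. ((-1)^k * ((real n + \<alpha>) gchoose (n - k)) / fact k) * y^k)"
  unfolding laguerre_def by (intro sum.cong) auto

lemma poly_id:
  fixes \<beta> x :: real and p :: nat
  defines "a \<equiv> real p + (\<beta> + 1)"
  defines "c \<equiv> \<lambda>k. (-1)^k * (a gchoose (p - k)) / fact k"
  defines "d \<equiv> \<lambda>k. (-1)^k * (a gchoose (Suc p - k)) / fact k"
  shows "(\<beta>+1) * (\<Sum>k=0..p. c k * x^k) - x * (\<Sum>k=0..p. c k * x^k)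
     + x * (\<Sum>k=0..p. c k * (real k * x^(k-1))) = real (Suc p) * (\<Sum>k=0..Suc p. d k * x^k)"
proof -
  have e1: "x * (c k * (real k * x^(k-1))) = real k * c k * x^k" for k
    by (cases k) auto
  have lhs: "(\<beta>+1) * (\<Sum>k=0..p. c k * x^k) - x * (\<Sum>k=0..p. c k * x^k)
     + x * (\<Sum>k=0..p. c k * (real k * x^(k-1)))
     = (\<Sum>k=0..p. (\<beta> + 1 + real k) * c k * x^k) - (\<Sum>k=0..p. c k * x^(Suc k))"
    apply (simp add: sum_distrib_left sum_subtractf[symmetric] sum.distrib[symmetric] algebra_simps)
    apply (intro sum.cong refl)
    subgoal for k by (cases k) (auto simp: algebra_simps)
    done
  have "real (Suc p) * (\<Sum>k=0..Suc p. d k * x^k)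
     = (\<Sum>k=0..Suc p. ((if k \<le> p then (\<beta> + 1 + real k) * c k else 0) - (if k = 0 then 0 else c (k-1))) * x^k)"
    unfolding sum_distrib_left
  proof (intro sum.cong refl)
    fix k assume "k \<in> {0..Suc p}"
    then have "(if k \<le> p then (\<beta> + 1 + real k) * c k else 0) - (if k = 0 then 0 else c (k-1))
         = real (Suc p) * d k" using coef_id[of k p \<beta>] unfolding c_def d_def a_def by simp
    then show "real (Suc p) * (d k * x ^ k) =
          ((if k \<le> p then (\<beta> + 1 + real k) * c k else 0) - (if k = 0 then 0 else c (k - 1))) * x ^ k"
      by simp
  qed
  also have "\<dots> = (\<Sum>k=0..Suc p. (if k \<le> p then (\<beta> + 1 + real k) * c k * x^k else 0))
        - (\<Sum>k=0..Suc p. (if k = 0 then 0 else c (k-1) * x^k))"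
    unfolding sum_subtractf[symmetric] by (intro sum.cong refl) (auto simp: left_diff_distrib)
  also have "(\<Sum>k=0..Suc p. (if k \<le> p then (\<beta> + 1 + real k) * c k * x^k else 0))
      = (\<Sum>k=0..p. (\<beta> + 1 + real k) * c k * x^k)"
    by (simp add: sum.atLeast0_atMost_Suc)
  also have "(\<Sum>k=0..Suc p. (if k = 0 then 0 else c (k-1) * x^k)) = (\<Sum>k=0..p. c k * x^(Suc k))"
    unfolding sum.atLeast0_atMost_Suc_shift by (simp add: comp_def)
  finally show ?thesis using lhs by simp
qed


lemma poly_deriv:
  "((\<lambda>y. \<Sum>k\<in>A. c k * y^k) has_real_derivative (\<Sum>k\<in>A. c k * (real k * x^(k-1)))) (at x)"
  by (intro DERIV_sum DERIV_cmult) (simp add: DERIV_pow)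

lemma lag_deriv:
  fixes \<beta> x :: real and p :: nat
  assumes "x > 0"
  shows "(laguerre_fun p (\<beta>+1) has_real_derivative laguerre_fun (Suc p) \<beta> x) (at x)"
proof -
  define a where "a = real p + (\<beta> + 1)"
  define c where "c = (\<lambda>k. (-1)^k * (a gchoose (p - k)) / fact k)"
  define d where "d = (\<lambda>k. (-1)^k * (a gchoose (Suc p - k)) / fact k)"
  define Q where "Q = (\<lambda>y. \<Sum>k=0..p. c k * y^k)"
  define Q' where "Q' = (\<Sum>k=0..p. c k * (real k * x^(k-1)))"
  define K where "K = fact p / Gamma (real p + (\<beta> + 1) + 1)"
  have Qe: "laguerre p (\<beta>+1) y = Q y" for y
    unfolding Q_def c_def a_def lag_sum by simp
  have Le: "laguerre (Suc p) \<beta> y = (\<Sum>k=0..Suc p. d k * y^k)" for y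
  proof -
    have "real (Suc p) + \<beta> = a" unfolding a_def by simp
    then show ?thesis unfolding d_def lag_sum by simp
  qed
  have fe: "laguerre_fun p (\<beta>+1) = (\<lambda>y. K * (y powr (\<beta>+1) * exp (-y) * Q y))"
    unfolding laguerre_fun_def K_def Qe by (simp add: fun_eq_iff)
  have dQ: "(Q has_real_derivative Q') (at x)" unfolding Q_def Q'_def by (rule poly_deriv)
  have dP: "((\<lambda>y. y powr (\<beta>+1)) has_real_derivative (\<beta>+1) * x powr \<beta>) (at x)"
    using has_real_derivative_powr[OF assms, of "\<beta>+1"] by simp
  have dE: "((\<lambda>y. exp (-y)) has_real_derivative - exp (-x)) (at x)"
    by (auto intro!: derivative_eq_intros)
  have "((\<lambda>y. K * (y powr (\<beta>+1) * exp (-y) * Q y)) has_real_derivative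
      K * (((\<beta>+1) * x powr \<beta> * exp (-x) + (- exp (-x)) * x powr (\<beta>+1)) * Q x + Q' * (x powr (\<beta>+1) * exp (-x)))) (at x)"
    by (intro DERIV_cmult DERIV_mult[OF DERIV_mult[OF dP dE] dQ])
  moreover have "K * (((\<beta>+1) * x powr \<beta> * exp (-x) + (- exp (-x)) * x powr (\<beta>+1)) * Q x + Q' * (x powr (\<beta>+1) * exp (-x)))
      = laguerre_fun (Suc p) \<beta> x"
  proof -
    have xp: "x powr (\<beta>+1) = x powr \<beta> * x" using assms by (simp add: powr_add)
    have id: "(\<beta>+1) * Q x - x * Q x + x * Q' = real (Suc p) * (\<Sum>k=0..Suc p. d k * x^k)"
      unfolding Q_def Q'_def c_def d_def a_def by (rule poly_id)
    have "K * (((\<beta>+1) * x powr \<beta> * exp (-x) + (- exp (-x)) * x powr (\<beta>+1)) * Q x + Q' * (x powr (\<beta>+1) * exp (-x)))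
       = K * x powr \<beta> * exp (-x) * ((\<beta>+1) * Q x - x * Q x + x * Q')"
      unfolding xp by (simp add: algebra_simps)
    also have "\<dots> = K * x powr \<beta> * exp (-x) * (real (Suc p) * (\<Sum>k=0..Suc p. d k * x^k))"
      unfolding id ..
    also have "\<dots> = laguerre_fun (Suc p) \<beta> x"
      unfolding laguerre_fun_def Le K_def
      by (simp add: field_split_simps del: sum.atLeast0_atMost_Suc)
    finally show ?thesis .
  qed
  ultimately show ?thesis unfolding fe by simp
qed


lemma telesc: "(\<Sum>k=0..i. (-1)^k * (H (Suc k) + H k)) = H 0 + (-1)^i * (H (Suc i) :: real)"
  by (induction i) (auto simp: algebra_simps)

definition FF :: "nat \<Rightarrow> nat \<Rightarrow> real \<Rightarrow> real \<Rightarrow> real" where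
  "FF n i \<alpha> x = (\<Sum>k=0..i. (-1)^k / fact (i - k) * x ^ (i - k)
            * laguerre_fun (n - 1 - k) (\<alpha> + 1 + real k) x)"

lemma F_deriv:
  assumes "i \<le> n - 1" "n \<ge> 1" "x > 0"
  shows "(FF n i \<alpha> has_real_derivative x ^ i / fact i * laguerre_fun n \<alpha> x) (at x)"
proof -
  define H where "H = (\<lambda>k. if k \<le> i then x^(i-k) / fact (i-k) * laguerre_fun (n-k) (\<alpha> + real k) x else 0)"
  have trm: "((\<lambda>y. (-1)^k / fact (i - k) * y ^ (i - k) * laguerre_fun (n - 1 - k) (\<alpha> + 1 + real k) y)
      has_real_derivative (-1)^k * (H (Suc k) + H k)) (at x)" if k: "k \<in> {0..i}" for k
  proof -
    define m where "m = n - 1 - k"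
    have nk: "n - k = Suc m" using k assms unfolding m_def by auto
    have ab: "\<alpha> + 1 + real k = (\<alpha> + real k) + 1" by simp
    have dl: "(laguerre_fun m (\<alpha> + 1 + real k) has_real_derivative laguerre_fun (Suc m) (\<alpha> + real k) x) (at x)"
      unfolding ab by (rule lag_deriv[OF assms(3)])
    have d: "((\<lambda>y. (-1)^k / fact (i - k) * y ^ (i - k) * laguerre_fun (n - 1 - k) (\<alpha> + 1 + real k) y)
      has_real_derivative (-1)^k / fact (i - k) * (real (i-k) * x^(i-k-1) * laguerre_fun m (\<alpha> + 1 + real k) x
          + laguerre_fun (Suc m) (\<alpha> + real k) x * x^(i-k))) (at x)"
      unfolding m_def[symmetric]
      using DERIV_cmult[OF DERIV_mult[OF DERIV_pow[of "i-k" x UNIV] dl], of "(-1)^k / fact (i - k)"]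
      by (simp add: mult.assoc)
    have "(-1)^k / fact (i - k) * (real (i-k) * x^(i-k-1) * laguerre_fun m (\<alpha> + 1 + real k) x
          + laguerre_fun (Suc m) (\<alpha> + real k) x * x^(i-k)) = (-1)^k * (H (Suc k) + H k)"
    proof (cases "k = i")
      case True
      then show ?thesis using k unfolding H_def nk[symmetric] by (simp add: algebra_simps)
    next
      case False
      then have ki: "k < i" using k by auto
      then have f: "fact (i - k) = real (i - k) * fact (i - Suc k)"
        by (metis Suc_diff_Suc fact_Suc of_nat_fact)
      have mk: "n - Suc k = m" "\<alpha> + real (Suc k) = \<alpha> + 1 + real k" "i - k - 1 = i - Suc k"
        unfolding m_def by auto
      have ik: "real (i - k) \<noteq> 0" using ki by simp
      show ?thesis using ki unfolding H_def nk[symmetric] mk f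
        using ik by (simp add: field_simps)
    qed
    then show ?thesis using d by simp
  qed
  have "(FF n i \<alpha> has_real_derivative (\<Sum>k=0..i. (-1)^k * (H (Suc k) + H k))) (at x)"
    unfolding FF_def by (intro DERIV_sum trm)
  moreover have "(\<Sum>k=0..i. (-1)^k * (H (Suc k) + H k)) = x ^ i / fact i * laguerre_fun n \<alpha> x"
    unfolding telesc by (simp add: H_def)
  ultimately show ?thesis by simp
qed


lemma powr_exp_lim: "((\<lambda>x::real. x ^ q * x powr b * exp (-x)) \<longlongrightarrow> 0) at_top"
  by real_asymp

lemma powr_lim0: "(b::real) > 0 \<Longrightarrow> ((\<lambda>x. x powr b) \<longlongrightarrow> 0) (at_right 0)"
  by real_asymp

lemma lf_lim0:
  assumes "\<beta> > 0"
  shows "(laguerre_fun p \<beta> \<longlongrightarrow> 0) (at_right 0)"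
proof -
  have "((\<lambda>x. fact p / Gamma (real p + \<beta> + 1) * x powr \<beta> * exp (- x) * laguerre p \<beta> x) \<longlongrightarrow>
      fact p / Gamma (real p + \<beta> + 1) * 0 * exp (- 0) * laguerre p \<beta> 0) (at_right 0)"
    unfolding laguerre_def
    by (intro tendsto_intros powr_lim0[OF assms]) auto
  then show ?thesis unfolding laguerre_fun_def[abs_def] by simp
qed

lemma lf_limtop: "((\<lambda>x. x^j * laguerre_fun p \<beta> x) \<longlongrightarrow> 0) at_top"
proof -
  define K where "K = fact p / Gamma (real p + \<beta> + 1)"
  define c where "c = (\<lambda>k. (-1)^k * ((real p + \<beta>) gchoose (p - k)) / fact k)"
  have eq: "x^j * laguerre_fun p \<beta> x = (\<Sum>k=0..p. K * c k * (x ^ (j + k) * x powr \<beta> * exp (-x)))" for x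
    unfolding laguerre_fun_def lag_sum K_def c_def sum_distrib_left
    by (intro sum.cong refl) (simp add: power_add algebra_simps)
  show ?thesis unfolding eq
    by (intro tendsto_null_sum tendsto_mult_right_zero powr_exp_lim)
qed

lemma FF_lim0:
  assumes "\<alpha> > -1"
  shows "(FF n i \<alpha> \<longlongrightarrow> 0) (at_right 0)"
  unfolding FF_def[abs_def]
proof (intro tendsto_null_sum)
  fix k assume "k \<in> {0..i}"
  have "((\<lambda>x. (-1)^k / fact (i - k) * x ^ (i - k) * laguerre_fun (n - 1 - k) (\<alpha> + 1 + real k) x) \<longlongrightarrow>
       (-1)^k / fact (i - k) * 0 ^ (i - k) * 0) (at_right 0)"
    using assms by (intro tendsto_intros lf_lim0) auto
  then show "((\<lambda>x. (-1)^k / fact (i - k) * x ^ (i - k) * laguerre_fun (n - 1 - k) (\<alpha> + 1 + real k) x) \<longlongrightarrow> 0) (at_right 0)"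
    by simp
qed

lemma FF_limtop: "(FF n i \<alpha> \<longlongrightarrow> 0) at_top"
  unfolding FF_def[abs_def] mult.assoc
  by (intro tendsto_null_sum tendsto_mult_right_zero lf_limtop)



lemma prod_roots_dvd:
  fixes p :: "real poly"
  assumes "finite S" "\<forall>a\<in>S. poly p a = 0"
  shows "(\<Prod>a\<in>S. [:-a,1:]) dvd p"
  using assms
proof (induction S rule: finite_induct)
  case empty then show ?case by simp
next
  case (insert a S)
  then obtain r where r: "p = (\<Prod>a\<in>S. [:-a,1:]) * r" by (auto elim: dvdE)
  have "poly (\<Prod>b\<in>S. [:-b,1:]) a \<noteq> 0"
    using insert(1,2) by (simp add: poly_prod)
  moreover have "poly p a = 0" using insert by simp
  ultimately have "poly r a = 0" using r by simp
  then have "[:-a,1:] dvd r" by (simp add: poly_eq_0_iff_dvd)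
  then obtain s where s: "r = [:-a,1:] * s" by (auto elim: dvdE)
  have "p = ([:-a,1:] * (\<Prod>a\<in>S. [:-a,1:])) * s" unfolding r s by (simp only: mult_ac)
  moreover have "(\<Prod>a\<in>insert a S. [:-a,1:]) = [:-a,1:] * (\<Prod>a\<in>S. [:-a,1:])"
    using insert(1,2) by (rule prod.insert)
  ultimately show ?case by (metis dvdI)
qed

lemma lag_factor:
  assumes "\<alpha> > -1" and "strict_mono_on {1..n} t"
    and "t ` {1..n} = {x. laguerre n \<alpha> x = 0}"
  obtains r where "\<And>x. laguerre n \<alpha> x = r * (\<Prod>m\<in>{1..n}. (x - t m))"
proof -
  define P where "P = (\<Sum>k=0..n. monom ((-1)^k * ((real n + \<alpha>) gchoose (n - k)) / fact k) k)"
  have Pe: "poly P x = laguerre n \<alpha> x" for x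
    unfolding P_def lag_sum poly_sum poly_monom ..
  have dP: "degree P \<le> n" unfolding P_def
    by (intro degree_sum_le) (auto intro: order.trans[OF degree_monom_le])
  have P0: "P \<noteq> 0" using lag_pos[OF assms(1), of 0 n] Pe[of 0] by auto
  define S where "S = t ` {1..n}"
  have inj: "inj_on t {1..n}" using assms(2) by (rule strict_mono_on_imp_inj_on)
  have cS: "card S = n" unfolding S_def using card_image[OF inj] by simp
  define q where "q = (\<Prod>a\<in>S. [:-a,1:])"
  have "q dvd P" unfolding q_def
  proof (rule prod_roots_dvd)
    show "finite S" unfolding S_def by simp
    show "\<forall>a\<in>S. poly P a = 0" using assms(3) Pe unfolding S_def by auto
  qed
  then obtain r where r: "P = q * r" by (auto elim: dvdE)
  have q0: "q \<noteq> 0" unfolding q_def by (simp add: S_def)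
  have dq: "degree q = n" unfolding q_def
    by (subst degree_prod_eq_sum_degree) (auto simp: cS)
  have r0: "r \<noteq> 0" using P0 r by auto
  have "degree P = n + degree r" using r q0 r0 dq by (simp add: degree_mult_eq)
  then have "degree r = 0" using dP by simp
  then obtain c where c: "r = [:c:]" by (rule degree_eq_zeroE)
  show ?thesis
  proof (rule that[of c])
    fix x
    have "laguerre n \<alpha> x = c * (\<Prod>a\<in>S. (x - a))"
      unfolding Pe[symmetric] r c q_def by (simp add: poly_prod)
    also have "(\<Prod>a\<in>S. (x - a)) = (\<Prod>m\<in>{1..n}. (x - t m))"
      unfolding S_def by (rule prod.reindex[OF inj, unfolded comp_def])
    finally show "laguerre n \<alpha> x = c * (\<Prod>m\<in>{1..n}. (x - t m))" .
  qed
qed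



lemma zeros_pos:
  assumes "\<alpha> > -1" "t ` {1..n} = {x. laguerre n \<alpha> x = 0}" "m \<in> {1..n}"
  shows "t m > 0"
proof (rule ccontr)
  assume "\<not> t m > 0"
  then have "laguerre n \<alpha> (t m) > 0" using lag_pos[OF assms(1)] by simp
  moreover have "laguerre n \<alpha> (t m) = 0" using assms(2,3) by auto
  ultimately show False by simp
qed

lemma lag_sign:
  assumes "\<alpha> > -1" and "strict_mono_on {1..n} t"
    and "t ` {1..n} = {x. laguerre n \<alpha> x = 0}"
    and "j \<le> n" "\<And>m. m \<in> {1..n} \<Longrightarrow> m \<le> j \<Longrightarrow> t m < x"
    "\<And>m. m \<in> {1..n} \<Longrightarrow> j < m \<Longrightarrow> x < t m"
  shows "\<bar>laguerre n \<alpha> x\<bar> = (-1)^j * laguerre n \<alpha> x"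
proof -
  obtain r where r: "\<And>x. laguerre n \<alpha> x = r * (\<Prod>m\<in>{1..n}. (x - t m))"
    using lag_factor[OF assms(1-3)] by blast
  have tp: "\<And>m. m \<in> {1..n} \<Longrightarrow> t m > 0" using zeros_pos[OF assms(1,3)] by blast
  have "(\<Prod>m\<in>{1..n}. (0 - t m)) = (-1)^n * (\<Prod>m\<in>{1..n}. t m)"
    using prod_uminus[of t "{1..n}"] by simp
  moreover have "(\<Prod>m\<in>{1..n}. t m) > 0" using tp by (intro prod_pos) auto
  moreover have "laguerre n \<alpha> 0 > 0" using lag_pos[OF assms(1)] by simp
  ultimately have "0 < (r * (-1)^n) * (\<Prod>m\<in>{1..n}. t m)" "(\<Prod>m\<in>{1..n}. t m) > 0"
    using r[of 0] by (simp_all only: mult.assoc)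
  then have rs: "r * (-1)^n > 0" by (simp add: zero_less_mult_iff)
  have split: "{1..n} = {1..j} \<union> {Suc j..n}" using assms(4) by auto
  have p1: "(\<Prod>m\<in>{1..n}. (x - t m)) = (\<Prod>m\<in>{1..j}. (x - t m)) * (\<Prod>m\<in>{Suc j..n}. (x - t m))"
    unfolding split by (rule prod.union_disjoint) auto
  have p2: "(\<Prod>m\<in>{Suc j..n}. (x - t m)) = (-1)^(n-j) * (\<Prod>m\<in>{Suc j..n}. (t m - x))"
    using prod_uminus[of "\<lambda>m. t m - x" "{Suc j..n}"] by simp
  have e: "(-1)^j * laguerre n \<alpha> x = (r * (-1)^n) * ((\<Prod>m\<in>{1..j}. (x - t m)) * (\<Prod>m\<in>{Suc j..n}. (t m - x)))"
  proof -
    have pw: "(-1::real)^j * (-1)^(n-j) = (-1)^n" using assms(4) by (simp add: power_add[symmetric])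
    show ?thesis unfolding r p1 p2 pw[symmetric] by (simp only: mult_ac)
  qed
  have "(\<Prod>m\<in>{1..j}. (x - t m)) > 0" using assms(4,5) by (intro prod_pos) auto
  moreover have "(\<Prod>m\<in>{Suc j..n}. (t m - x)) > 0" using assms(6) by (intro prod_pos) auto
  ultimately have "(-1)^j * laguerre n \<alpha> x > 0" unfolding e using rs by simp
  then have "\<bar>(-1)^j * laguerre n \<alpha> x\<bar> = (-1)^j * laguerre n \<alpha> x" by simp
  then show ?thesis by (simp add: abs_mult)
qed



definition TT :: "nat \<Rightarrow> (nat \<Rightarrow> real) \<Rightarrow> nat \<Rightarrow> ereal" where
  "TT n t j = (if j = 0 then ereal 0 else if j \<le> n then ereal (t j) else \<infinity>)"

definition VV :: "nat \<Rightarrow> nat \<Rightarrow> real \<Rightarrow> (nat \<Rightarrow> real) \<Rightarrow> nat \<Rightarrow> real" where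
  "VV n i \<alpha> t j = (if j = 0 \<or> n < j then 0 else FF n i \<alpha> (t j))"

lemma TT_less:
  assumes "\<alpha> > -1" and "strict_mono_on {1..n} t"
    and "t ` {1..n} = {x. laguerre n \<alpha> x = 0}"
    and "j < k" "k \<le> Suc n"
  shows "TT n t j < TT n t k"
proof (cases "k \<le> n")
  case True
  show ?thesis
  proof (cases "j = 0")
    case True
    then show ?thesis using zeros_pos[OF assms(1,3), of k] \<open>k \<le> n\<close> assms(4) by (auto simp: TT_def)
  next
    case False
    then have "t j < t k" using strict_mono_onD[OF assms(2)] assms(4) \<open>k \<le> n\<close> by auto
    then show ?thesis using False \<open>k \<le> n\<close> assms(4) by (auto simp: TT_def)
  qed
next
  case False
  then show ?thesis using assms(4,5) by (auto simp: TT_def)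
qed

lemma TT_le:
  assumes "\<alpha> > -1" and "strict_mono_on {1..n} t"
    and "t ` {1..n} = {x. laguerre n \<alpha> x = 0}"
    and "j \<le> k" "k \<le> Suc n"
  shows "TT n t j \<le> TT n t k"
  using TT_less[OF assms(1-3), of j k] assms(4,5) by (cases "j = k") auto

lemma altsum: "(\<Sum>j=0..N. (-1)^j * (W (Suc j) - W j)) = (-1)^N * W (Suc N) - W 0 + 2 * (\<Sum>m=1..N. (-1)^(m+1) * (W m :: real))"
  by (induction N) (auto simp: algebra_simps)

lemma lf_abs:
  assumes "\<alpha> > -1" "x > 0"
  shows "\<bar>laguerre_fun n \<alpha> x\<bar> = fact n / Gamma (real n + \<alpha> + 1) * x powr \<alpha> * exp (- x) * \<bar>laguerre n \<alpha> x\<bar>"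
proof -
  have "Gamma (real n + \<alpha> + 1) > 0" using assms by (intro Gamma_real_pos) simp
  then show ?thesis unfolding laguerre_fun_def by (simp add: abs_mult)
qed

lemma g_cont:
  assumes "x > 0"
  shows "isCont (\<lambda>x. x ^ i / fact i * \<bar>laguerre_fun n \<alpha> x\<bar>) x"
  unfolding laguerre_fun_def laguerre_def using assms
  by (intro continuous_intros) auto



lemma F_cont_at:
  assumes "i \<le> n - 1" "n \<ge> 1" "x > 0"
  shows "(FF n i \<alpha> \<longlongrightarrow> FF n i \<alpha> x) (at x)"
  using DERIV_isCont[OF F_deriv[OF assms]] by (simp add: isCont_def)

lemma piece:
  assumes a1: "\<alpha> > -1" and a2: "i \<le> n - 1" and a3: "n \<ge> 1"
    and sm: "strict_mono_on {1..n} t"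
    and z: "t ` {1..n} = {x. laguerre n \<alpha> x = 0}"
    and j: "j \<le> n"
  shows "set_integrable lborel (einterval (TT n t j) (TT n t (Suc j))) (\<lambda>x. x ^ i / fact i * \<bar>laguerre_fun n \<alpha> x\<bar>)"
    "(LINT x:einterval (TT n t j) (TT n t (Suc j))|lborel. x ^ i / fact i * \<bar>laguerre_fun n \<alpha> x\<bar>)
       = (-1)^j * (VV n i \<alpha> t (Suc j) - VV n i \<alpha> t j)"
proof -
  let ?g = "\<lambda>x. x ^ i / fact i * \<bar>laguerre_fun n \<alpha> x\<bar>"
  let ?a = "TT n t j" and ?b = "TT n t (Suc j)"
  have ab: "?a < ?b" using TT_less[OF a1 sm z, of j "Suc j"] j by simp
  have inside: "x > 0 \<and> ?g x = (-1)^j * (x ^ i / fact i * laguerre_fun n \<alpha> x)"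
    if x: "?a < ereal x" "ereal x < ?b" for x
  proof -
    have a0: "TT n t 0 \<le> ?a" using TT_le[OF a1 sm z, of 0 j] j by simp
    then have "TT n t 0 < ereal x" using x(1) by (rule order.strict_trans1)
    then have xpos: "x > 0" by (simp add: TT_def)
    have lo: "t m < x" if "m \<in> {1..n}" "m \<le> j" for m
    proof -
      have "TT n t m \<le> ?a" using TT_le[OF a1 sm z, of m j] that j by simp
      then have "TT n t m < ereal x" using x(1) by (rule order.strict_trans1)
      then show ?thesis using that by (simp add: TT_def)
    qed
    have hi: "x < t m" if "m \<in> {1..n}" "j < m" for m
    proof -
      have "?b \<le> TT n t m" using TT_le[OF a1 sm z, of "Suc j" m] that by simp
      with x(2) have "ereal x < TT n t m" by (rule order.strict_trans2)
      then show ?thesis using that by (simp add: TT_def)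
    qed
    have s: "\<bar>laguerre n \<alpha> x\<bar> = (-1)^j * laguerre n \<alpha> x"
      by (rule lag_sign[OF a1 sm z j lo hi])
    have "?g x = (-1)^j * (x ^ i / fact i * laguerre_fun n \<alpha> x)"
      unfolding lf_abs[OF a1 xpos] s unfolding laguerre_fun_def by (simp add: algebra_simps)
    then show ?thesis using xpos by simp
  qed
  have D: "((\<lambda>x. (-1)^j * FF n i \<alpha> x) has_real_derivative ?g x) (at x)"
    if "?a < ereal x" "ereal x < ?b" for x
  proof -
    have e: "?g x = (-1)^j * (x ^ i / fact i * laguerre_fun n \<alpha> x)" and xp: "x > 0"
      using inside[OF that] by blast+
    show ?thesis unfolding e by (rule DERIV_cmult[OF F_deriv[OF a2 a3 xp]])
  qed
  have C: "isCont ?g x" if "?a < ereal x" "ereal x < ?b" for x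
    using g_cont inside[OF that] by blast
  have N: "AE x in lborel. ?a < ereal x \<longrightarrow> ereal x < ?b \<longrightarrow> 0 \<le> ?g x"
  proof (intro AE_I2 impI)
    fix x assume "?a < ereal x" "ereal x < ?b"
    then have "x > 0" using inside by blast
    then show "0 \<le> ?g x" by simp
  qed
  have A: "(((\<lambda>x. (-1)^j * FF n i \<alpha> x) \<circ> real_of_ereal) \<longlongrightarrow> (-1)^j * VV n i \<alpha> t j) (at_right ?a)"
  proof (cases "j = 0")
    case True
    have "(((\<lambda>x. (-1)^j * FF n i \<alpha> x) \<circ> real_of_ereal) \<longlongrightarrow> 0) (at_right (ereal 0))"
      by (subst ereal_tendsto_simps1) (intro tendsto_mult_right_zero FF_lim0[OF a1])
    then show ?thesis using True by (simp add: TT_def VV_def)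
  next
    case False
    have "t j > 0" using zeros_pos[OF a1 z, of j] False j by auto
    then have "(FF n i \<alpha> \<longlongrightarrow> FF n i \<alpha> (t j)) (at_right (t j))"
      using F_cont_at[OF a2 a3] by (metis at_le filterlim_mono order_refl top_greatest)
    then have "(((\<lambda>x. (-1)^j * FF n i \<alpha> x) \<circ> real_of_ereal) \<longlongrightarrow> (-1)^j * FF n i \<alpha> (t j)) (at_right (ereal (t j)))"
      by (subst ereal_tendsto_simps1) (intro tendsto_mult_left)
    then show ?thesis using False j by (simp add: TT_def VV_def)
  qed
  have B: "(((\<lambda>x. (-1)^j * FF n i \<alpha> x) \<circ> real_of_ereal) \<longlongrightarrow> (-1)^j * VV n i \<alpha> t (Suc j)) (at_left ?b)"
  proof (cases "Suc j \<le> n")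
    case False
    have "(((\<lambda>x. (-1)^j * FF n i \<alpha> x) \<circ> real_of_ereal) \<longlongrightarrow> 0) (at_left \<infinity>)"
      by (subst ereal_tendsto_simps1) (intro tendsto_mult_right_zero FF_limtop)
    then show ?thesis using False by (simp add: TT_def VV_def)
  next
    case True
    have "t (Suc j) > 0" using zeros_pos[OF a1 z, of "Suc j"] True by auto
    then have "(FF n i \<alpha> \<longlongrightarrow> FF n i \<alpha> (t (Suc j))) (at_left (t (Suc j)))"
      using F_cont_at[OF a2 a3] by (metis at_le filterlim_mono order_refl top_greatest)
    then have "(((\<lambda>x. (-1)^j * FF n i \<alpha> x) \<circ> real_of_ereal) \<longlongrightarrow> (-1)^j * FF n i \<alpha> (t (Suc j))) (at_left (ereal (t (Suc j))))"
      by (subst ereal_tendsto_simps1) (intro tendsto_mult_left)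
    then show ?thesis using True by (simp add: TT_def VV_def)
  qed
  note R = interval_integral_FTC_nonneg[OF ab D C N A B]
  show "set_integrable lborel (einterval ?a ?b) ?g" by (rule R(1))
  show "(LINT x:einterval ?a ?b|lborel. ?g x) = (-1)^j * (VV n i \<alpha> t (Suc j) - VV n i \<alpha> t j)"
  proof -
    have le: "?a \<le> ?b" using ab by simp
    have "(LBINT x=?a..?b. ?g x) = (LINT x:einterval ?a ?b|lborel. ?g x)"
      unfolding interval_lebesgue_integral_def by (simp only: le if_True)
    then show ?thesis using R(2) by (metis right_diff_distrib)
  qed
qed



lemma pointwise:
  assumes a1: "\<alpha> > -1" and sm: "strict_mono_on {1..n} t"
    and z: "t ` {1..n} = {x. laguerre n \<alpha> x = 0}"
  shows "indicator {0<..} x *\<^sub>R (x ^ i / fact i * \<bar>laguerre_fun n \<alpha> x\<bar>)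
    = (\<Sum>j\<in>{0..n}. indicator (einterval (TT n t j) (TT n t (Suc j))) x *\<^sub>R (x ^ i / fact i * \<bar>laguerre_fun n \<alpha> x\<bar>))"
proof -
  let ?g = "x ^ i / fact i * \<bar>laguerre_fun n \<alpha> x\<bar>"
  let ?P = "\<lambda>j. einterval (TT n t j) (TT n t (Suc j))"
  have pos: "x > 0" if "x \<in> ?P j" "j \<le> n" for j
  proof -
    have "TT n t 0 \<le> TT n t j" using TT_le[OF a1 sm z, of 0 j] that by simp
    moreover have "TT n t j < ereal x" using that by (simp add: einterval_iff)
    ultimately have "TT n t 0 < ereal x" by (rule order.strict_trans1)
    then show ?thesis by (simp add: TT_def)
  qed
  show ?thesis
  proof (cases "x > 0 \<and> laguerre n \<alpha> x \<noteq> 0")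
    case False
    then have "indicator (?P j) x *\<^sub>R ?g = 0" if "j \<in> {0..n}" for j
      using pos[of j] that by (auto simp: laguerre_fun_def indicator_def)
    then have "(\<Sum>j\<in>{0..n}. indicator (?P j) x *\<^sub>R ?g) = 0" by (rule sum.neutral[rule_format])
    moreover have "indicator {0<..} x *\<^sub>R ?g = 0"
      using False by (auto simp: laguerre_fun_def indicator_def)
    ultimately show ?thesis by linarith
  next
    case True
    then have xp: "x > 0" and lx: "laguerre n \<alpha> x \<noteq> 0" by auto
    define J where "J = {j\<in>{0..n}. TT n t j < ereal x}"
    have fJ: "finite J" unfolding J_def by simp
    have J0: "0 \<in> J" unfolding J_def using xp by (simp add: TT_def)
    define j0 where "j0 = Max J"
    have j0J: "j0 \<in> J" unfolding j0_def using fJ J0 by (intro Max_in) auto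
    have j0max: "j \<le> j0" if "j \<in> J" for j unfolding j0_def using fJ that by simp
    have j0n: "j0 \<le> n" using j0J unfolding J_def by simp
    have inP: "x \<in> ?P j0"
    proof -
      have "TT n t j0 < ereal x" using j0J unfolding J_def by simp
      moreover have "ereal x < TT n t (Suc j0)"
      proof (cases "Suc j0 \<le> n")
        case True
        then have "Suc j0 \<notin> J" using j0max by fastforce
        then have "\<not> ereal (t (Suc j0)) < ereal x" using True unfolding J_def by (simp add: TT_def)
        moreover have "t (Suc j0) \<noteq> x"
        proof
          assume "t (Suc j0) = x"
          moreover have "laguerre n \<alpha> (t (Suc j0)) = 0" using z True by auto
          ultimately show False using lx by simp
        qed
        ultimately show ?thesis using True by (simp add: TT_def)
      next
        case False
        then show ?thesis by (simp add: TT_def)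
      qed
      ultimately show ?thesis by (simp add: einterval_iff)
    qed
    have notP: "x \<notin> ?P j" if "j \<in> {0..n}" "j \<noteq> j0" for j
    proof
      assume xj: "x \<in> ?P j"
      show False
      proof (cases "j < j0")
        case True
        have "TT n t (Suc j) \<le> TT n t j0" using TT_le[OF a1 sm z, of "Suc j" j0] True j0n by simp
        moreover have "TT n t j0 < ereal x" using j0J unfolding J_def by simp
        moreover have "ereal x < TT n t (Suc j)" using xj by (simp add: einterval_iff)
        ultimately show False by simp
      next
        case False
        then have "j0 < j" using that by simp
        moreover have "j \<in> J" using xj that unfolding J_def by (simp add: einterval_iff)
        ultimately show False using j0max by fastforce
      qed
    qed
    have "(\<Sum>j\<in>{0..n}. indicator (?P j) x *\<^sub>R ?g) = (\<Sum>j\<in>{0..n}. if j = j0 then ?g else 0)"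
      using inP notP by (intro sum.cong refl) (auto simp: indicator_def)
    also have "\<dots> = ?g" using j0n by simp
    finally show ?thesis using xp by simp
  qed
qed

theorem theorem2p3:
  fixes n i :: nat and \<alpha> :: real and t :: "nat \<Rightarrow> real"
  assumes "\<alpha> > -1" and "i \<le> n - 1" and "n \<ge> 1"
    and "strict_mono_on {1..n} t"
    and "t ` {1..n} = {x. laguerre n \<alpha> x = 0}"
  shows "set_integrable lborel {0<..} (\<lambda>x. x ^ i / fact i * \<bar>laguerre_fun n \<alpha> x\<bar>)
    \<and> (LINT x:{0<..}|lborel. x ^ i / fact i * \<bar>laguerre_fun n \<alpha> x\<bar>) =
      2 * (\<Sum>m=1..n. (-1)^(m+1) * (\<Sum>k=0..i. (-1)^k / fact (i - k) * t m ^ (i - k)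
            * laguerre_fun (n - 1 - k) (\<alpha> + 1 + real k) (t m)))"
proof -
  let ?g = "\<lambda>x. x ^ i / fact i * \<bar>laguerre_fun n \<alpha> x\<bar>"
  let ?P = "\<lambda>j. einterval (TT n t j) (TT n t (Suc j))"
  have fe: "(\<lambda>x. indicator {0<..} x *\<^sub>R ?g x) = (\<lambda>x. \<Sum>j\<in>{0..n}. indicator (?P j) x *\<^sub>R ?g x)"
    using pointwise[OF assms(1,4,5)] by (intro ext) blast
  have pint: "integrable lborel (\<lambda>x. indicator (?P j) x *\<^sub>R ?g x)" if "j \<in> {0..n}" for j
    using piece(1)[OF assms(1-5), of j] that unfolding set_integrable_def by simp
  have I: "set_integrable lborel {0<..} ?g"
    unfolding set_integrable_def fe
    by (rule Bochner_Integration.integrable_sum[where I="{0..n}" and M=lborel and f="\<lambda>j x. indicator (?P j) x *\<^sub>R ?g x", OF pint])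
  have "(LINT x:{0<..}|lborel. ?g x) = (\<Sum>j\<in>{0..n}. (LINT x:?P j|lborel. ?g x))"
    unfolding set_lebesgue_integral_def fe
    by (rule Bochner_Integration.integral_sum[where I="{0..n}" and M=lborel and f="\<lambda>j x. indicator (?P j) x *\<^sub>R ?g x", OF pint])
  also have "\<dots> = (\<Sum>j=0..n. (-1)^j * (VV n i \<alpha> t (Suc j) - VV n i \<alpha> t j))"
    using piece(2)[OF assms(1-5)] by (intro sum.cong refl) simp
  also have "\<dots> = 2 * (\<Sum>m=1..n. (-1)^(m+1) * VV n i \<alpha> t m)"
    unfolding altsum by (simp add: VV_def)
  also have "(\<Sum>m=1..n. (-1)^(m+1) * VV n i \<alpha> t m) = (\<Sum>m=1..n. (-1)^(m+1) * FF n i \<alpha> (t m))"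
    by (intro sum.cong refl) (simp add: VV_def)
  finally show ?thesis using I unfolding FF_def by simp
qed

end
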